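(* Let $G$ be a finite connected graph that is either non-bipartite or contains a node of degree larger than two. Then for every $k$ with $2\le k<|V|$, the $k$-node CIS relationship graph $G^{(k)}$ is non-bipartite.
   Context: Let $G=(V,E,L)$ be a finite undirected graph with node set $V$, edge set $E$ (unordered pairs of distinct nodes) and a set $L$ of edge labels (labels play no role here). For $V'\subseteq V$, the induced subgraph on $V'$ has node set $V'$ and edge set $\{(i,j)\in E: i,j\in V'\}$. A $k$-node CIS (connected induced subgraph) is an induced subgraph on a $k$-element set $V'\subseteq V$ that is connected; $C^{(k)}$ denotes the set of all $k$-node CISes of $G$. The $k$-node CIS relationship graph $G^{(k)}=(C^{(k)},R^{(k)})$ is the simple undirected graph whose nodes are the elements of $C^{(k)}$, where two distinct CISes $s_1,s_2\in C^{(k)}$ are adjacent iff their node sets share exactly $k-1$ nodes. *)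

theory Defs
  imports Main
begin

text \<open>A finite simple undirected graph is given by a finite node set V and a set E
of edges, each edge an unordered pair {i,j} of distinct nodes of V.
Edge labels play no role and are omitted.\<close>

definition simple_graph :: "'a set \<Rightarrow> 'a set set \<Rightarrow> bool" where
  "simple_graph V E \<longleftrightarrow> finite V \<and> (\<forall>e\<in>E. \<exists>i j. e = {i, j} \<and> i \<noteq> j \<and> i \<in> V \<and> j \<in> V)"

definition induced_connected :: "'a set set \<Rightarrow> 'a set \<Rightarrow> bool" where
  "induced_connected E S \<longleftrightarrow> S \<noteq> {} \<and>
     (\<forall>x\<in>S. \<forall>y\<in>S. (x, y) \<in> ({(u, v). u \<in> S \<and> v \<in> S \<and> {u, v} \<in> E})\<^sup>*)"

definition graph_connected :: "'a set \<Rightarrow> 'a set set \<Rightarrow> bool" where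
  "graph_connected V E \<longleftrightarrow> induced_connected E V"

definition degree :: "'a set set \<Rightarrow> 'a \<Rightarrow> nat" where
  "degree E v = card {u. {u, v} \<in> E}"

text \<open>C^(k): node sets of k-node connected induced subgraphs (an induced subgraph is
determined by its node set).\<close>
definition CIS :: "'a set \<Rightarrow> 'a set set \<Rightarrow> nat \<Rightarrow> 'a set set" where
  "CIS V E k = {S. S \<subseteq> V \<and> card S = k \<and> induced_connected E S}"

definition CIS_rel :: "'a set \<Rightarrow> 'a set set \<Rightarrow> nat \<Rightarrow> ('a set \<times> 'a set) set" where
  "CIS_rel V E k = {(s1, s2). s1 \<in> CIS V E k \<and> s2 \<in> CIS V E k \<and> s1 \<noteq> s2
                      \<and> card (s1 \<inter> s2) = k - 1}"

definition bipartite :: "'b set \<Rightarrow> ('b \<times> 'b) set \<Rightarrow> bool" where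
  "bipartite N R \<longleftrightarrow> (\<exists>c :: 'b \<Rightarrow> bool. \<forall>(x, y)\<in>R. x \<in> N \<and> y \<in> N \<longrightarrow> c x \<noteq> c y)"

definition graph_bipartite :: "'a set \<Rightarrow> 'a set set \<Rightarrow> bool" where
  "graph_bipartite V E \<longleftrightarrow> bipartite V {(u, v). {u, v} \<in> E}"

end

theory Submission
  imports Defs
begin

lemma sg_edge:
  assumes "simple_graph V E" "{a,b} \<in> E"
  shows "a \<in> V \<and> b \<in> V \<and> a \<noteq> b"
proof -
  obtain i j where "{a,b} = {i,j}" "i \<noteq> j" "i \<in> V" "j \<in> V"
    using assms unfolding simple_graph_def by blast
  then show ?thesis by (metis doubleton_eq_iff insert_absorb2)
qed

lemma ic_single: "induced_connected E {v}"
  by (simp add: induced_connected_def)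

lemma ic_insert:
  assumes "induced_connected E S" "w \<in> S" "{u,w} \<in> E"
  shows "induced_connected E (insert u S)"
proof -
  define R where "R = {(a, b). a \<in> insert u S \<and> b \<in> insert u S \<and> {a, b} \<in> E}"
  have sub: "{(a, b). a \<in> S \<and> b \<in> S \<and> {a, b} \<in> E} \<subseteq> R" unfolding R_def by auto
  have S: "\<forall>x\<in>S. \<forall>y\<in>S. (x,y) \<in> R\<^sup>*"
    using assms(1) rtrancl_mono[OF sub] unfolding induced_connected_def by blast
  have uw: "(u,w) \<in> R" using assms(2,3) unfolding R_def by auto
  have wu: "(w,u) \<in> R" using assms(2,3) unfolding R_def by (auto simp: insert_commute)
  have "\<forall>x\<in>insert u S. \<forall>y\<in>insert u S. (x,y) \<in> R\<^sup>*"
  proof (intro ballI)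
    fix x y assume x: "x \<in> insert u S" and y: "y \<in> insert u S"
    show "(x,y) \<in> R\<^sup>*"
    proof (cases "x = u")
      case True
      show ?thesis
      proof (cases "y = u")
        case True with \<open>x = u\<close> show ?thesis by simp
      next
        case False
        then have "y \<in> S" using y by simp
        then have "(w,y) \<in> R\<^sup>*" using S assms(2) by blast
        then show ?thesis using uw \<open>x = u\<close> by (meson converse_rtrancl_into_rtrancl)
      qed
    next
      case False
      then have xS: "x \<in> S" using x by simp
      show ?thesis
      proof (cases "y = u")
        case True
        have "(x,w) \<in> R\<^sup>*" using S assms(2) xS by blast
        then show ?thesis using wu True by (meson rtrancl_into_rtrancl)
      next
        case False
        then show ?thesis using S xS y by simp
      qed
    qed
  qed
  then show ?thesis unfolding induced_connected_def R_def by blast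
qed

lemma exit_edge:
  assumes "graph_connected V E" "W \<subseteq> V" "W \<noteq> {}" "W \<noteq> V"
  shows "\<exists>u\<in>V-W. \<exists>w\<in>W. {u,w} \<in> E"
proof -
  define R where "R = {(a, b). a \<in> V \<and> b \<in> V \<and> {a, b} \<in> E}"
  obtain w0 where w0: "w0 \<in> W" using assms(3) by blast
  obtain u0 where u0: "u0 \<in> V - W" using assms(2,4) by blast
  have "(w0,u0) \<in> R\<^sup>*" using assms(1,2) w0 u0
    unfolding graph_connected_def induced_connected_def R_def by blast
  have gen: "(a,b) \<in> R\<^sup>* \<Longrightarrow> a \<in> W \<Longrightarrow> b \<in> W \<or> (\<exists>u\<in>V-W. \<exists>w\<in>W. {u,w} \<in> E)" for a b
  proof (induction rule: rtrancl_induct)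
    case base then show ?case by simp
  next
    case (step b c)
    then have "b \<in> V" "c \<in> V" "{c,b} \<in> E" unfolding R_def by (auto simp: insert_commute)
    then show ?case using step by blast
  qed
  show ?thesis using gen[OF \<open>(w0,u0) \<in> R\<^sup>*\<close> w0] u0 by blast
qed

definition TB :: "'a set \<Rightarrow> 'a set set \<Rightarrow> nat \<Rightarrow> bool" where
  "TB V E j \<longleftrightarrow> (\<exists>W x y z. W \<subseteq> V \<and> card W = Suc j \<and> induced_connected E W \<and>
     x \<in> W \<and> y \<in> W \<and> z \<in> W \<and> x \<noteq> y \<and> x \<noteq> z \<and> y \<noteq> z \<and>
     induced_connected E (W - {x}) \<and> induced_connected E (W - {y}) \<and> induced_connected E (W - {z}))"

lemma TB_step:
  assumes sg: "simple_graph V E" and gc: "graph_connected V E" and tb: "TB V E j"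
    and lt: "Suc j < card V"
  shows "TB V E (Suc j)"
proof -
  obtain W x y z where W: "W \<subseteq> V" "card W = Suc j" "induced_connected E W"
     "x \<in> W" "y \<in> W" "z \<in> W" "x \<noteq> y" "x \<noteq> z" "y \<noteq> z"
     "induced_connected E (W - {x})" "induced_connected E (W - {y})" "induced_connected E (W - {z})"
    using tb unfolding TB_def by blast
  have fV: "finite V" using sg unfolding simple_graph_def by blast
  have fW: "finite W" using W(1) fV finite_subset by blast
  have "W \<noteq> V" using W(2) lt by auto
  moreover have "W \<noteq> {}" using W(4) by blast
  ultimately obtain u w where u: "u \<in> V - W" and w: "w \<in> W" and uw: "{u,w} \<in> E"
    using exit_edge[OF gc W(1)] by blast
  define W' where "W' = insert u W"
  have W'V: "W' \<subseteq> V" using u W(1) unfolding W'_def by blast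
  have cW': "card W' = Suc (Suc j)" using u fW W(2) unfolding W'_def by simp
  have icW': "induced_connected E W'" using ic_insert[OF W(3) w uw] unfolding W'_def .
  have Wu: "induced_connected E (W' - {u})" using u W(3) unfolding W'_def by simp
  have nc: "induced_connected E (W' - {t})" if "t \<in> W" "t \<noteq> w" "induced_connected E (W - {t})" for t
  proof -
    have "W' - {t} = insert u (W - {t})" using u that unfolding W'_def by auto
    moreover have "induced_connected E (insert u (W - {t}))"
    proof (rule ic_insert[OF _ _ uw])
      show "induced_connected E (W - {t})" using that by blast
      show "w \<in> W - {t}" using that w by blast
    qed
    ultimately show ?thesis by simp
  qed
  have uin: "u \<in> W'" unfolding W'_def by simp
  have sub: "W \<subseteq> W'" unfolding W'_def by blast
  have ux: "u \<noteq> x" "u \<noteq> y" "u \<noteq> z" using u W by auto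
  have fin: "TB V E (Suc j)" if "a \<in> W" "b \<in> W" "a \<noteq> b" "a \<noteq> w" "b \<noteq> w"
     "induced_connected E (W - {a})" "induced_connected E (W - {b})" for a b
  proof -
    have "u \<noteq> a" "u \<noteq> b" using u that by auto
    moreover have "a \<in> W'" "b \<in> W'" using that sub by auto
    moreover have "induced_connected E (W' - {a})" "induced_connected E (W' - {b})"
      using nc that by auto
    ultimately show ?thesis unfolding TB_def
      using W'V cW' icW' Wu uin that(3) by (intro exI[of _ W'] exI[of _ u] exI[of _ a] exI[of _ b]) simp
  qed
  show ?thesis
  proof (cases "w = x")
    case True
    then show ?thesis using fin[of y z] W by blast
  next
    case False
    show ?thesis
    proof (cases "w = y")
      case True
      then show ?thesis using fin[of x z] W False by blast
    next
      case False
      then show ?thesis using fin[of x y] W \<open>w \<noteq> x\<close> by blast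
    qed
  qed
qed

lemma TB_up:
  assumes sg: "simple_graph V E" and gc: "graph_connected V E"
    and tb: "TB V E j" and jk: "j \<le> k" and kc: "k < card V"
  shows "TB V E k"
proof -
  have "\<forall>n. j + n \<le> k \<longrightarrow> TB V E (j + n)"
  proof
    fix n show "j + n \<le> k \<longrightarrow> TB V E (j + n)"
    proof (induction n)
      case 0 show ?case using tb by simp
    next
      case (Suc n)
      show ?case
      proof
        assume a: "j + Suc n \<le> k"
        then have "TB V E (j + n)" using Suc by simp
        moreover have "Suc (j + n) < card V" using a kc by simp
        ultimately have "TB V E (Suc (j + n))" by (rule TB_step[OF sg gc])
        then show "TB V E (j + Suc n)" by simp
      qed
    qed
  qed
  then have "j + (k - j) \<le> k \<longrightarrow> TB V E (j + (k - j))" by (rule spec)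
  with jk show ?thesis by simp
qed

lemma bip_tri:
  assumes "bipartite N R" "(a,b) \<in> R" "(b,c) \<in> R" "(a,c) \<in> R"
    "a \<in> N" "b \<in> N" "c \<in> N"
  shows False
proof -
  have "\<exists>col. \<forall>(x, y)\<in>R. x \<in> N \<and> y \<in> N \<longrightarrow> (col x :: bool) \<noteq> col y"
    using assms(1) unfolding bipartite_def .
  then obtain col where c: "\<forall>(x, y)\<in>R. x \<in> N \<and> y \<in> N \<longrightarrow> (col x :: bool) \<noteq> col y" ..
  have h: "(col x :: bool) \<noteq> col y" if "(x,y) \<in> R" "x \<in> N" "y \<in> N" for x y
  proof -
    have "case (x,y) of (x, y) \<Rightarrow> x \<in> N \<and> y \<in> N \<longrightarrow> (col x :: bool) \<noteq> col y"
      using c that(1) by (rule bspec)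
    then show ?thesis using that(2,3) by simp
  qed
  have "col a \<noteq> col b" using h assms(2,5,6) by this
  moreover have "col b \<noteq> col c" using h assms(3,6,7) by this
  moreover have "col a \<noteq> col c" using h assms(4,5,7) by this
  ultimately show False by (cases "col a"; cases "col b"; simp)
qed

lemma TB_tri:
  assumes sg: "simple_graph V E" and tb: "TB V E k"
  shows "\<not> bipartite (CIS V E k) (CIS_rel V E k)"
proof
  assume bip: "bipartite (CIS V E k) (CIS_rel V E k)"
  obtain W x y z where W: "W \<subseteq> V" "card W = Suc k" "induced_connected E W"
     "x \<in> W" "y \<in> W" "z \<in> W" "x \<noteq> y" "x \<noteq> z" "y \<noteq> z"
     "induced_connected E (W - {x})" "induced_connected E (W - {y})" "induced_connected E (W - {z})"
    using tb unfolding TB_def by blast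
  have fV: "finite V" using sg unfolding simple_graph_def by blast
  have fW: "finite W" using W(1) fV finite_subset by blast
  have inC: "W - {t} \<in> CIS V E k" if "t \<in> W" "induced_connected E (W - {t})" for t
    using that W(1,2) fW unfolding CIS_def by auto
  have rel: "(W - {s}, W - {t}) \<in> CIS_rel V E k"
    if "s \<in> W" "t \<in> W" "s \<noteq> t" "induced_connected E (W - {s})" "induced_connected E (W - {t})" for s t
  proof -
    have "(W - {s}) \<inter> (W - {t}) = W - {s,t}" by blast
    moreover have "card (W - {s,t}) = k - 1"
    proof -
      have "card (W - {s,t}) = card W - card {s,t}" using that fW by (intro card_Diff_subset) auto
      then show ?thesis using that W(2) by simp
    qed
    moreover have "W - {s} \<noteq> W - {t}" using that by blast
    ultimately show ?thesis unfolding CIS_rel_def using inC that by auto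
  qed
  have r1: "(W - {x}, W - {y}) \<in> CIS_rel V E k" using rel[of x y] W by simp
  have r2: "(W - {y}, W - {z}) \<in> CIS_rel V E k" using rel[of y z] W by simp
  have r3: "(W - {x}, W - {z}) \<in> CIS_rel V E k" using rel[of x z] W by simp
  have i1: "W - {x} \<in> CIS V E k" using inC[of x] W by simp
  have i2: "W - {y} \<in> CIS V E k" using inC[of y] W by simp
  have i3: "W - {z} \<in> CIS V E k" using inC[of z] W by simp
  show False using bip_tri[OF bip r1 r2 r3 i1 i2 i3] .
qed

definition walk :: "'a set set \<Rightarrow> (nat \<Rightarrow> 'a) \<Rightarrow> nat \<Rightarrow> bool" where
  "walk E p n \<longleftrightarrow> (\<forall>i<n. {p i, p (Suc i)} \<in> E)"

lemma rtrancl_walk: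
  assumes "(x,y) \<in> {(u,v). u \<in> S \<and> v \<in> S \<and> {u,v} \<in> E}\<^sup>*"
  shows "\<exists>p n. walk E p n \<and> p 0 = x \<and> p n = y"
  using assms
proof (induction rule: rtrancl_induct)
  case base
  show ?case by (rule exI[of _ "\<lambda>_. x"], rule exI[of _ 0]) (simp add: walk_def)
next
  case (step y z)
  then obtain p n where p: "walk E p n" "p 0 = x" "p n = y" by blast
  have e: "{y,z} \<in> E" using step(2) by simp
  have "walk E (p(Suc n := z)) (Suc n)"
    unfolding walk_def
  proof (intro allI impI)
    fix i assume "i < Suc n"
    then show "{(p(Suc n := z)) i, (p(Suc n := z)) (Suc i)} \<in> E"
      using p e unfolding walk_def by (cases "i = n") auto
  qed
  moreover have "(p(Suc n := z)) 0 = x" "(p(Suc n := z)) (Suc n) = z" using p by simp_all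
  ultimately show ?case by blast
qed

lemma walk_rev:
  assumes "walk E p n"
  shows "walk E (\<lambda>i. p (n - i)) n"
  unfolding walk_def
proof (intro allI impI)
  fix i assume i: "i < n"
  have "{p (n - Suc i), p (Suc (n - Suc i))} \<in> E" using assms i unfolding walk_def by simp
  moreover have "Suc (n - Suc i) = n - i" using i by simp
  ultimately show "{p (n - i), p (n - Suc i)} \<in> E" by (simp add: insert_commute)
qed

lemma walk_append:
  assumes "walk E p n" "walk E q m" "p n = q 0"
  shows "walk E (\<lambda>i. if i \<le> n then p i else q (i - n)) (n + m)"
  unfolding walk_def
proof (intro allI impI)
  fix i assume i: "i < n + m"
  show "{if i \<le> n then p i else q (i - n), if Suc i \<le> n then p (Suc i) else q (Suc i - n)} \<in> E"
  proof (cases "i < n")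
    case True
    then show ?thesis using assms(1) unfolding walk_def by simp
  next
    case False
    then have "i - n < m" "Suc i - n = Suc (i - n)" using i by auto
    then have "{q (i - n), q (Suc i - n)} \<in> E" using assms(2) unfolding walk_def by simp
    moreover have "(if i \<le> n then p i else q (i - n)) = q (i - n)" using False assms(3) by auto
    ultimately show ?thesis using False by simp
  qed
qed

lemma odd_closed_walk:
  assumes sg: "simple_graph V E" and gc: "graph_connected V E" and nb: "\<not> graph_bipartite V E"
  shows "\<exists>p m. walk E p m \<and> p m = p 0 \<and> odd m"
proof -
  have "V \<noteq> {}" using gc unfolding graph_connected_def induced_connected_def by blast
  then obtain r where r: "r \<in> V" by blast
  define P where "P x = (\<exists>p n. walk E p n \<and> p 0 = r \<and> p n = x \<and> even n)" for x
  have wk: "\<exists>p n. walk E p n \<and> p 0 = r \<and> p n = x" if "x \<in> V" for x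
  proof -
    have "(r, x) \<in> {(u,v). u \<in> V \<and> v \<in> V \<and> {u,v} \<in> E}\<^sup>*"
      using gc r that unfolding graph_connected_def induced_connected_def by blast
    then show ?thesis by (rule rtrancl_walk)
  qed
  have par: "\<exists>p n. walk E p n \<and> p 0 = r \<and> p n = x \<and> (even n \<longleftrightarrow> P x)" if xV: "x \<in> V" for x
  proof (cases "P x")
    case True then show ?thesis unfolding P_def by blast
  next
    case False
    obtain p n where "walk E p n" "p 0 = r" "p n = x" using wk[OF xV] by blast
    moreover have "odd n" using False calculation unfolding P_def by blast
    ultimately show ?thesis using False by blast
  qed
  have "\<not> (\<forall>(u, v)\<in>{(u, v). {u, v} \<in> E}. u \<in> V \<and> v \<in> V \<longrightarrow> P u \<noteq> P v)"
    using nb unfolding graph_bipartite_def bipartite_def by blast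
  then obtain u v where uv: "{u,v} \<in> E" "u \<in> V" "v \<in> V" "P u = P v" by blast
  obtain p n1 where p: "walk E p n1" "p 0 = r" "p n1 = u" "even n1 \<longleftrightarrow> P u" using par[OF uv(2)] by blast
  obtain q n2 where q: "walk E q n2" "q 0 = r" "q n2 = v" "even n2 \<longleftrightarrow> P v" using par[OF uv(3)] by blast
  define e where "e = (\<lambda>i::nat. if i = 0 then u else v)"
  have we: "walk E e 1" using uv(1) unfolding walk_def e_def by simp
  define w1 where "w1 = (\<lambda>i. if i \<le> n1 then p i else e (i - n1))"
  have w1: "walk E w1 (n1 + 1)" unfolding w1_def by (rule walk_append[OF p(1) we]) (simp add: p e_def)
  have w1e: "w1 (Suc n1) = v" "w1 0 = r"
    unfolding w1_def e_def using p(2) by simp_all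
  define rq where "rq = (\<lambda>i. q (n2 - i))"
  have wrq: "walk E rq n2" unfolding rq_def by (rule walk_rev[OF q(1)])
  define w2 where "w2 = (\<lambda>i. if i \<le> n1 + 1 then w1 i else rq (i - (n1 + 1)))"
  have w2: "walk E w2 (n1 + 1 + n2)" unfolding w2_def
    by (rule walk_append[OF w1 wrq]) (simp add: w1e rq_def q)
  have vr: "n2 = 0 \<Longrightarrow> v = r" using q(2,3) by simp
  have "w2 (n1 + 1 + n2) = r"
    using vr by (cases "n2 = 0") (auto simp: w2_def rq_def q w1e)
  moreover have "w2 0 = r" using w1e unfolding w2_def by simp
  moreover have "odd (n1 + 1 + n2)" using p(4) q(4) uv(4) by auto
  ultimately show ?thesis using w2 by metis
qed

lemma odd_cycle:
  assumes "walk E f m" "f m = f 0" "odd m"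
  shows "\<exists>g m'. walk E g m' \<and> g m' = g 0 \<and> odd m' \<and> inj_on g {0..<m'}"
  using assms
proof (induction m arbitrary: f rule: less_induct)
  case (less m)
  show ?case
  proof (cases "inj_on f {0..<m}")
    case True then show ?thesis using less.prems by blast
  next
    case False
    then obtain i j where ij: "i < j" "j < m" "f i = f j"
      unfolding inj_on_def by (metis atLeastLessThan_iff linorder_neqE_nat)
    define g1 where "g1 = (\<lambda>t. f (i + t))"
    have w1: "walk E g1 (j - i)" using less.prems(1) ij unfolding walk_def g1_def by auto
    have c1: "g1 (j - i) = g1 0" using ij unfolding g1_def by simp
    define g2 where "g2 = (\<lambda>t. if t \<le> i then f t else f (t + (j - i)))"
    have w2: "walk E g2 (m - (j - i))"
      unfolding walk_def
    proof (intro allI impI)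
      fix t assume t: "t < m - (j - i)"
      show "{g2 t, g2 (Suc t)} \<in> E"
      proof (cases "t < i")
        case True
        then show ?thesis using less.prems(1) ij unfolding walk_def g2_def by auto
      next
        case False
        have "t + (j - i) < m" using t ij by auto
        then have "{f (t + (j - i)), f (Suc (t + (j - i)))} \<in> E"
          using less.prems(1) unfolding walk_def by blast
        moreover have "g2 t = f (t + (j - i))" using False ij unfolding g2_def by auto
        moreover have "g2 (Suc t) = f (Suc (t + (j - i)))" using False unfolding g2_def by auto
        ultimately show ?thesis by simp
      qed
    qed
    have c2: "g2 (m - (j - i)) = g2 0"
    proof -
      have "m - (j - i) > i" using ij by auto
      then have "g2 (m - (j - i)) = f (m - (j - i) + (j - i))" unfolding g2_def by auto
      also have "\<dots> = f m" using ij by auto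
      finally show ?thesis using less.prems(2) unfolding g2_def by simp
    qed
    have "odd (j - i) \<or> odd (m - (j - i))" using less.prems(3) ij by auto
    then show ?thesis
    proof
      assume "odd (j - i)"
      moreover have "j - i < m" using ij by auto
      ultimately show ?thesis using less.IH w1 c1 by blast
    next
      assume "odd (m - (j - i))"
      moreover have "m - (j - i) < m" using ij by auto
      ultimately show ?thesis using less.IH w2 c2 by blast
    qed
  qed
qed

lemma bip_oddwalk:
  assumes "bipartite N R" "\<forall>i<m. (a i, a (Suc i)) \<in> R \<and> a i \<in> N \<and> a (Suc i) \<in> N"
    "a m = a 0" "odd m"
  shows False
proof -
  have "\<exists>col. \<forall>(x, y)\<in>R. x \<in> N \<and> y \<in> N \<longrightarrow> (col x :: bool) \<noteq> col y"
    using assms(1) unfolding bipartite_def .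
  then obtain col where c: "\<forall>(x, y)\<in>R. x \<in> N \<and> y \<in> N \<longrightarrow> (col x :: bool) \<noteq> col y" ..
  have h: "(col x :: bool) \<noteq> col y" if "(x,y) \<in> R" "x \<in> N" "y \<in> N" for x y
  proof -
    have "case (x,y) of (x, y) \<Rightarrow> x \<in> N \<and> y \<in> N \<longrightarrow> (col x :: bool) \<noteq> col y"
      using c that(1) by (rule bspec)
    then show ?thesis using that(2,3) by simp
  qed
  have "i \<le> m \<longrightarrow> (col (a i) \<longleftrightarrow> (col (a 0) \<longleftrightarrow> even i))" for i
  proof (induction i)
    case 0 show ?case by simp
  next
    case (Suc i)
    show ?case
    proof
      assume "Suc i \<le> m"
      then have "i < m" by simp
      then have "col (a i) \<noteq> col (a (Suc i))" using h assms(2) by blast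
      then show "col (a (Suc i)) \<longleftrightarrow> (col (a 0) \<longleftrightarrow> even (Suc i))"
        using Suc \<open>i < m\<close> by auto
    qed
  qed
  then have "col (a m) \<longleftrightarrow> (col (a 0) \<longleftrightarrow> even m)" by blast
  then show False using assms(3,4) by simp
qed

lemma mod_window_inj:
  fixes a b m j :: nat
  assumes "a mod m = b mod m" "j \<le> a" "a < j + m" "j \<le> b" "b < j + m"
  shows "a = b"
proof (rule ccontr)
  assume ne: "a \<noteq> b"
  show False
  proof (cases "a < b")
    case True
    then have "m dvd (b - a)" using assms(1) by (metis mod_eq_dvd_iff_nat less_imp_le_nat)
    moreover have "0 < b - a" "b - a < m" using True assms by auto
    ultimately show False using nat_dvd_not_less by blast
  next
    case False
    then have "b < a" using ne by simp
    then have "m dvd (a - b)" using assms(1) by (metis mod_eq_dvd_iff_nat less_imp_le_nat)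
    moreover have "0 < a - b" "a - b < m" using \<open>b < a\<close> assms by auto
    ultimately show False using nat_dvd_not_less by blast
  qed
qed

lemma mod_window_image:
  fixes m j :: nat
  assumes "0 < m"
  shows "(\<lambda>i. i mod m) ` {j..<j+m} = {0..<m}"
proof
  show "(\<lambda>i. i mod m) ` {j..<j+m} \<subseteq> {0..<m}" using assms by auto
  show "{0..<m} \<subseteq> (\<lambda>i. i mod m) ` {j..<j+m}"
  proof
    fix r assume r: "r \<in> {0..<m}"
    define i where "i = (if j mod m \<le> r then j - j mod m + r else j - j mod m + m + r)"
    have jm: "j mod m \<le> j" by simp
    have "j - j mod m = m * (j div m)" by (simp add: minus_mod_eq_mult_div)
    moreover have "(m * (j div m) + m + r) mod m = r"
    proof -
      have e1: "m * (j div m) + m + r = r + m * Suc (j div m)" by simp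
      have e2: "(r + m * Suc (j div m)) mod m = r mod m" by (rule mod_mult_self2)
      have e3: "r mod m = r" using r by simp
      show ?thesis unfolding e1 e2 e3 ..
    qed
    ultimately have "i mod m = r" using r unfolding i_def by auto
    moreover have "i \<in> {j..<j+m}"
    proof -
      have lt: "j mod m < m" using assms by simp
      show ?thesis
      proof (cases "j mod m \<le> r")
        case True
        then have "i = j - j mod m + r" unfolding i_def by simp
        then show ?thesis using True jm lt r by auto
      next
        case False
        then have "i = j - j mod m + m + r" unfolding i_def by simp
        then show ?thesis using False jm lt r by auto
      qed
    qed
    ultimately show "r \<in> (\<lambda>i. i mod m) ` {j..<j+m}" by force
  qed
qed

lemma arc_connected:
  assumes "\<forall>i. {h i, h (Suc i)} \<in> E"
  shows "induced_connected E (h ` {i..<i + Suc n})"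
proof (induction n)
  case 0
  have "h ` {i..<i + Suc 0} = {h i}" by simp
  then show ?case using ic_single by metis
next
  case (Suc n)
  have "h ` {i..<i + Suc (Suc n)} = insert (h (i + Suc n)) (h ` {i..<i + Suc n})"
    by (simp add: atLeastLessThanSuc insert_commute)
  moreover have "induced_connected E (insert (h (i + Suc n)) (h ` {i..<i + Suc n}))"
  proof (rule ic_insert[OF Suc])
    show "h (i + n) \<in> h ` {i..<i + Suc n}" by simp
    have "{h (i + n), h (Suc (i + n))} \<in> E" using assms by blast
    then show "{h (i + Suc n), h (i + n)} \<in> E" by (simp add: insert_commute)
  qed
  ultimately show ?case by simp
qed

lemma cycle_case:
  assumes sg: "simple_graph V E" and gc: "graph_connected V E"
    and gw: "walk E g m" and gc0: "g m = g 0" and om: "odd m" and ginj: "inj_on g {0..<m}"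
    and k2: "2 \<le> k" and kV: "k < card V"
  shows "\<not> bipartite (CIS V E k) (CIS_rel V E k)"
proof -
  have m0: "0 < m" using om by (cases m) auto
  have m1: "m \<noteq> 1"
  proof
    assume "m = 1"
    then have "{g 0, g 1} \<in> E" "g 1 = g 0" using gw gc0 unfolding walk_def by auto
    then show False using sg_edge[OF sg] by fastforce
  qed
  have m3: "3 \<le> m" using om m0 m1 by presburger
  define h where "h i = g (i mod m)" for i
  have hE: "\<forall>i. {h i, h (Suc i)} \<in> E"
  proof
    fix i
    define r where "r = i mod m"
    have rm: "r < m" unfolding r_def using m0 by simp
    have "h (Suc i) = g (Suc r)"
      using gc0 unfolding h_def r_def by (simp add: mod_Suc)
    moreover have "h i = g r" unfolding h_def r_def by simp
    moreover have "{g r, g (Suc r)} \<in> E" using gw rm unfolding walk_def by blast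
    ultimately show "{h i, h (Suc i)} \<in> E" by simp
  qed
  have hV: "h i \<in> V" for i using sg_edge[OF sg] hE by blast
  have hinj: "inj_on h {j..<j+m}" for j
  proof (rule inj_onI)
    fix a b assume a: "a \<in> {j..<j+m}" and b: "b \<in> {j..<j+m}" and e: "h a = h b"
    have "a mod m \<in> {0..<m}" "b mod m \<in> {0..<m}" using m0 by auto
    moreover have "g (a mod m) = g (b mod m)" using e unfolding h_def .
    ultimately have "a mod m = b mod m" by (rule inj_onD[OF ginj, rotated])
    then show "a = b" by (rule mod_window_inj) (use a b in auto)
  qed
  have himg: "h ` {j..<j+m} = g ` {0..<m}" for j
  proof -
    have "h ` {j..<j+m} = g ` ((\<lambda>i. i mod m) ` {j..<j+m})" unfolding h_def by (simp add: image_image)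
    then show ?thesis using mod_window_image[OF m0] by simp
  qed
  have hper: "h (t + m) = h t" for t unfolding h_def by simp
  have arc: "induced_connected E (h ` {i..<i + Suc n})" for i n by (rule arc_connected[OF hE])
  have arcard: "card (h ` {i..<i + n}) = n" if "n \<le> m" for i n
  proof -
    have "inj_on h {i..<i+n}" by (rule inj_on_subset[OF hinj[of i]]) (use that in auto)
    then show ?thesis by (simp add: card_image)
  qed
  show ?thesis
  proof (cases "k < m")
    case True
    define A where "A i = h ` {i..<i+k}" for i
    have Acis: "A i \<in> CIS V E k" for i
    proof -
      have "A i \<subseteq> V" unfolding A_def using hV by blast
      moreover have "card (A i) = k" unfolding A_def using arcard True by simp
      moreover have "induced_connected E (A i)"
        using arc[of i "k - 1"] k2 unfolding A_def by simp
      ultimately show ?thesis unfolding CIS_def by blast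
    qed
    have Arel: "(A i, A (Suc i)) \<in> CIS_rel V E k" for i
    proof -
      have "A i \<inter> A (Suc i) = h ` ({i..<i+k} \<inter> {Suc i..<Suc i+k})"
        unfolding A_def using True by (intro inj_on_image_Int[OF hinj[of i], symmetric]) auto
      also have "{i..<i+k} \<inter> {Suc i..<Suc i+k} = {Suc i..<Suc i + (k - 1)}" using k2 by auto
      finally have I: "A i \<inter> A (Suc i) = h ` {Suc i..<Suc i + (k - 1)}" .
      have cI: "card (A i \<inter> A (Suc i)) = k - 1" unfolding I using arcard[of "k - 1" "Suc i"] True by simp
      have "A i \<noteq> A (Suc i)"
      proof
        assume "A i = A (Suc i)"
        then have "card (A i \<inter> A (Suc i)) = k" using Acis[of i] unfolding CIS_def by simp
        then show False using cI k2 by simp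
      qed
      then show ?thesis unfolding CIS_rel_def using Acis cI by blast
    qed
    have Am: "A m = A 0"
    proof -
      have e1: "(\<lambda>t. h (t + m)) ` {0..<k} = h ` ((\<lambda>n. n + m) ` {0..<k})"
        by (simp only: image_image)
      have e2: "(\<lambda>n. n + m) ` {0..<k} = {m..<m+k}"
        by (simp only: image_add_atLeastLessThan') (simp add: add.commute)
      have "A m = (\<lambda>t. h (t + m)) ` {0..<k}" unfolding A_def e1 e2 by simp
      then show ?thesis unfolding A_def hper by simp
    qed
    show ?thesis
    proof
      assume bip: "bipartite (CIS V E k) (CIS_rel V E k)"
      show False
        by (rule bip_oddwalk[OF bip _ Am om]) (use Arel Acis in blast)
    qed
  next
    case False
    define W where "W = h ` {0..<m}"
    have Wg: "W = h ` {j..<j+m}" for j unfolding W_def using himg[of j] himg[of 0] by simp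
    have Wt: "W - {h t} = h ` {Suc t..<Suc t + Suc (m - 2)}" for t
    proof -
      have "{t..<t+m} = insert t {Suc t..<t+m}" using m0 by auto
      then have "W = insert (h t) (h ` {Suc t..<t+m})" using Wg[of t] by simp
      moreover have "h t \<notin> h ` {Suc t..<t+m}"
      proof
        assume "h t \<in> h ` {Suc t..<t+m}"
        then obtain s where s: "s \<in> {Suc t..<t+m}" "h t = h s" by blast
        then have "t = s" using hinj[of t] m0 unfolding inj_on_def by auto
        then show False using s by simp
      qed
      moreover have eq: "Suc t + Suc (m - 2) = t + m" using m3 by simp
      ultimately show ?thesis unfolding eq by simp
    qed
    have tb: "TB V E (m - 1)" unfolding TB_def
    proof (intro exI conjI)
      show "W \<subseteq> V" unfolding W_def using hV by blast
      show "card W = Suc (m - 1)" unfolding W_def using arcard[of m 0] m0 by simp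
      show "induced_connected E W" unfolding W_def using arc[of 0 "m - 1"] m0 by simp
      show "h 0 \<in> W" "h 1 \<in> W" "h 2 \<in> W" unfolding W_def using m3 by auto
      have hd: "h a \<noteq> h b" if "a < m" "b < m" "a \<noteq> b" for a b
        using inj_onD[OF hinj[of 0], of a b] that by auto
      show "h 0 \<noteq> h 1" "h 0 \<noteq> h 2" "h 1 \<noteq> h 2" using hd m3 by auto
      show "induced_connected E (W - {h 0})" "induced_connected E (W - {h 1})"
        "induced_connected E (W - {h 2})" unfolding Wt by (rule arc)+
    qed
    have "TB V E k" by (rule TB_up[OF sg gc tb]) (use False kV in auto)
    then show ?thesis by (rule TB_tri[OF sg])
  qed
qed

lemma three_elems:
  assumes "2 < card A"
  shows "\<exists>a b c. a \<in> A \<and> b \<in> A \<and> c \<in> A \<and> a \<noteq> b \<and> a \<noteq> c \<and> b \<noteq> c"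
proof -
  have fA: "finite A" using assms card.infinite by fastforce
  have "A \<noteq> {}" using assms by (metis card.empty not_less_zero)
  then obtain a where a: "a \<in> A" by blast
  have c1: "1 < card (A - {a})" using assms a fA by simp
  have "A - {a} \<noteq> {}" using c1 by (metis card.empty not_less_zero less_trans zero_less_one)
  then obtain b where b: "b \<in> A - {a}" by blast
  have c2: "0 < card (A - {a} - {b})" using c1 b fA by simp
  have "A - {a} - {b} \<noteq> {}" using c2 by (metis card.empty less_irrefl)
  then obtain c where c: "c \<in> A - {a} - {b}" by blast
  show ?thesis using a b c by blast
qed

theorem theorem2:
  fixes V :: "'a set" and E :: "'a set set" and k :: nat
  assumes "simple_graph V E"
    and "graph_connected V E"
    and "\<not> graph_bipartite V E \<or> (\<exists>v\<in>V. degree E v > 2)"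
    and "2 \<le> k" and "k < card V"
  shows "\<not> bipartite (CIS V E k) (CIS_rel V E k)"
proof (cases "graph_bipartite V E")
  case False
  obtain p m where "walk E p m" "p m = p 0" "odd m"
    using odd_closed_walk[OF assms(1,2) False] by blast
  then obtain g m' where g: "walk E g m'" "g m' = g 0" "odd m'" "inj_on g {0..<m'}"
    using odd_cycle by blast
  show ?thesis by (rule cycle_case[OF assms(1,2) g assms(4,5)])
next
  case True
  then obtain v where v: "v \<in> V" "2 < degree E v" using assms(3) by blast
  then obtain a b c where abc: "{a,v} \<in> E" "{b,v} \<in> E" "{c,v} \<in> E" "a \<noteq> b" "a \<noteq> c" "b \<noteq> c"
    using three_elems[of "{u. {u, v} \<in> E}"] unfolding degree_def by auto
  have av: "a \<noteq> v" "b \<noteq> v" "c \<noteq> v" "a \<in> V" "b \<in> V" "c \<in> V"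
    using sg_edge[OF assms(1) abc(1)] sg_edge[OF assms(1) abc(2)] sg_edge[OF assms(1) abc(3)] by auto
  show ?thesis
  proof (cases "k = 2")
    case True
    have cis: "{v, t} \<in> CIS V E k" if "{t,v} \<in> E" "t \<noteq> v" "t \<in> V" for t
    proof -
      have "induced_connected E (insert t {v})" by (rule ic_insert[OF ic_single _ that(1)]) simp
      then show ?thesis unfolding CIS_def using True that v(1) by (auto simp: insert_commute)
    qed
    have rel: "({v, s}, {v, t}) \<in> CIS_rel V E k"
      if "{s,v} \<in> E" "s \<noteq> v" "s \<in> V" "{t,v} \<in> E" "t \<noteq> v" "t \<in> V" "s \<noteq> t" for s t
    proof -
      have "{v, s} \<inter> {v, t} = {v}" using that by auto
      moreover have "{v, s} \<noteq> {v, t}" using that by (auto simp: doubleton_eq_iff)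
      ultimately show ?thesis unfolding CIS_rel_def using cis that True by auto
    qed
    show ?thesis
    proof
      assume bip: "bipartite (CIS V E k) (CIS_rel V E k)"
      show False
        by (rule bip_tri[OF bip rel[of a b] rel[of b c] rel[of a c] cis[of a] cis[of b] cis[of c]])
          (use abc av in auto)
    qed
  next
    case False
    have tb3: "TB V E 3" unfolding TB_def
    proof (intro exI conjI)
      let ?W = "{v, a, b, c}"
      show "?W \<subseteq> V" using v av by auto
      show "card ?W = Suc 3" using abc av by auto
      have c1: "induced_connected E {b, v}"
        using ic_insert[OF ic_single[of E v] _ abc(2)] by simp
      have c2: "induced_connected E {c, b, v}"
        by (rule ic_insert[OF c1 _ abc(3)]) simp
      have c3: "induced_connected E {a, c, b, v}"
        by (rule ic_insert[OF c2 _ abc(1)]) simp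
      have c4: "induced_connected E {c, a, v}"
        by (rule ic_insert[OF ic_insert[OF ic_single[of E v] _ abc(1)] _ abc(3)]) simp_all
      have c5: "induced_connected E {b, a, v}"
        by (rule ic_insert[OF ic_insert[OF ic_single[of E v] _ abc(1)] _ abc(2)]) simp_all
      have "{a, c, b, v} = ?W" by auto
      then show "induced_connected E ?W" using c3 by simp
      show "a \<in> ?W" "b \<in> ?W" "c \<in> ?W" by auto
      show "a \<noteq> b" "a \<noteq> c" "b \<noteq> c" using abc by auto
      have "?W - {a} = {c, b, v}" using abc av by auto
      then show "induced_connected E (?W - {a})" using c2 by simp
      have "?W - {b} = {c, a, v}" using abc av by auto
      then show "induced_connected E (?W - {b})" using c4 by simp
      have "?W - {c} = {b, a, v}" using abc av by auto
      then show "induced_connected E (?W - {c})" using c5 by simp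
    qed
    have "TB V E k" by (rule TB_up[OF assms(1,2) tb3]) (use False assms(4,5) in auto)
    then show ?thesis by (rule TB_tri[OF assms(1)])
  qed
qed

end
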